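(* There is a constant $c>0$ such that for all $n$, any family of pairwise disjoint $[1,n]$-rectangles whose union is $\mathcal{L}_n$ has at least $2^{cn}$ members.
   Context: $X=\{x_1,\dots,x_n\}$, $Y=\{y_1,\dots,y_n\}$, $Z=X\cup Y$. $\mathcal{L}_n=\{U\subseteq Z : \exists i\in[n],\ x_i\in U,\ y_i\in U\}$. A $[1,n]$-rectangle is a family $S\times T=\{U\cup V: U\in S, V\in T\}$ with $S\subseteq\mathcal{P}(X)$ and $T\subseteq\mathcal{P}(Y)$. *)

theory Defs
  imports Complex_Main
begin

text \<open>Ground set Z = X \<union> Y, with x_i encoded as Inl i and y_i as Inr i, i \<in> {1..n}.\<close>

definition Xs :: "nat \<Rightarrow> (nat + nat) set" where
  "Xs n = Inl ` {1..n}"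

definition Ys :: "nat \<Rightarrow> (nat + nat) set" where
  "Ys n = Inr ` {1..n}"

definition Zs :: "nat \<Rightarrow> (nat + nat) set" where
  "Zs n = Xs n \<union> Ys n"

definition Lfam :: "nat \<Rightarrow> (nat + nat) set set" where
  "Lfam n = {U. U \<subseteq> Zs n \<and> (\<exists>i\<in>{1..n}. Inl i \<in> U \<and> Inr i \<in> U)}"

definition rect_prod :: "'a set set \<Rightarrow> 'a set set \<Rightarrow> 'a set set" where
  "rect_prod S T = {U \<union> V | U V. U \<in> S \<and> V \<in> T}"

definition is_rect :: "nat \<Rightarrow> (nat + nat) set set \<Rightarrow> bool" where
  "is_rect n R \<longleftrightarrow> (\<exists>S T. S \<subseteq> Pow (Xs n) \<and> T \<subseteq> Pow (Ys n) \<and> R = rect_prod S T)"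

end

theory Submission imports Defs "HOL-Library.Function_Algebras" begin

interpretation fv: vector_space "\<lambda>(c::real) (f::nat set \<Rightarrow> real) x. c * f x"
  by unfold_locales (auto simp: plus_fun_def algebra_simps)

lemma sum_fun_apply: "(\<Sum>i\<in>I. g i) x = (\<Sum>i\<in>I. (g i x :: 'b::comm_monoid_add))"
  by (induction I rule: infinite_finite_induct) (auto simp: plus_fun_def zero_fun_def)

definition row :: "nat \<Rightarrow> nat set \<Rightarrow> nat set \<Rightarrow> real" where
  "row n A = (\<lambda>B. if B \<subseteq> {1..n} \<and> A \<inter> B = {} then 1 else 0)"

lemma row_compl: "A \<subseteq> {1..n} \<Longrightarrow> A' \<subseteq> {1..n} \<Longrightarrow> row n A' ({1..n} - A) = (if A' \<subseteq> A then 1 else 0)"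
  unfolding row_def by auto

lemma row_inj: "inj_on (row n) (Pow {1..n})"
proof (rule inj_onI)
  fix A A' assume A: "A \<in> Pow {1..n}" and A': "A' \<in> Pow {1..n}" and e: "row n A = row n A'"
  have "row n A ({1..n} - A) = row n A' ({1..n} - A)" using e by simp
  hence 1: "A' \<subseteq> A" using row_compl[of A n A'] row_compl[of A n A] A A' by (auto split: if_splits)
  have "row n A ({1..n} - A') = row n A' ({1..n} - A')" using e by simp
  hence 2: "A \<subseteq> A'" using row_compl[of A' n A'] row_compl[of A' n A] A A' by (auto split: if_splits)
  show "A = A'" using 1 2 by blast
qed

lemma row_coeffs_zero:
  assumes h: "\<And>B. (\<Sum>A\<in>Pow {1..n}. u A * row n A B) = 0"
  shows "A \<subseteq> {1..n} \<Longrightarrow> u A = 0"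
proof (induction "card A" arbitrary: A rule: less_induct)
  case less
  have fA: "finite A" using less.prems finite_subset by blast
  have "0 = (\<Sum>A'\<in>Pow {1..n}. u A' * row n A' ({1..n} - A))" using h by simp
  also have "\<dots> = (\<Sum>A'\<in>Pow {1..n}. if A' \<in> Pow A then u A' else 0)"
    by (rule sum.cong) (use row_compl[OF less.prems] in auto)
  also have "\<dots> = (\<Sum>A'\<in>Pow A. u A')"
    using less.prems by (subst sum.If_cases) (auto intro: sum.cong)
  also have "\<dots> = u A + (\<Sum>A'\<in>Pow A - {A}. u A')"
    using fA by (subst sum.remove[of _ A]) auto
  also have "(\<Sum>A'\<in>Pow A - {A}. u A') = 0"
  proof (rule sum.neutral, rule ballI)
    fix A' assume "A' \<in> Pow A - {A}"
    hence "A' \<subseteq> A" "A' \<noteq> A" by auto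
    hence "card A' < card A" using fA by (meson psubsetI psubset_card_mono)
    then show "u A' = 0" using less \<open>A' \<subseteq> A\<close> by blast
  qed
  finally show ?case by simp
qed

lemma row_indep: "fv.independent (row n ` Pow {1..n})"
proof (rule fv.independent_if_scalars_zero)
  show "finite (row n ` Pow {1..n})" by simp
  fix f x assume s: "(\<Sum>x\<in>row n ` Pow {1..n}. (\<lambda>y. f x * x y)) = 0" and x: "x \<in> row n ` Pow {1..n}"
  then obtain A where A: "A \<subseteq> {1..n}" "x = row n A" by auto
  have "\<And>B. (\<Sum>A\<in>Pow {1..n}. f (row n A) * row n A B) = 0"
  proof -
    fix B
    have "(\<Sum>x\<in>row n ` Pow {1..n}. (\<lambda>y. f x * x y)) B = 0" using s by (simp add: zero_fun_def)
    then show "(\<Sum>A\<in>Pow {1..n}. f (row n A) * row n A B) = 0"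
      using sum.reindex[OF row_inj, of "\<lambda>x. f x * x B"] by (simp add: sum_fun_apply)
  qed
  from row_coeffs_zero[OF this A(1)] show "f x = 0" using A by simp
qed

lemma mem_rect:
  assumes "S \<subseteq> Pow (Xs n)" "T \<subseteq> Pow (Ys n)"
  shows "(Inl`A \<union> Inr`B \<in> rect_prod S T) = (Inl`A \<in> S \<and> Inr`B \<in> T)"
proof
  assume "Inl`A \<union> Inr`B \<in> rect_prod S T"
  then obtain U V where UV: "Inl`A \<union> Inr`B = U \<union> V" "U \<in> S" "V \<in> T" unfolding rect_prod_def by auto
  have "U \<subseteq> Inl ` {1..n}" using UV(2) assms(1) unfolding Xs_def by blast
  hence U: "U \<subseteq> range Inl" by blast
  have "V \<subseteq> Inr ` {1..n}" using UV(3) assms(2) unfolding Ys_def by blast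
  hence V: "V \<subseteq> range Inr" by blast
  have "U = (Inl`A \<union> Inr`B) \<inter> range Inl" using U V UV(1) by auto
  hence "U = Inl`A" by auto
  moreover have "V = (Inl`A \<union> Inr`B) \<inter> range Inr" using U V UV(1) by auto
  hence "V = Inr`B" by auto
  ultimately show "Inl`A \<in> S \<and> Inr`B \<in> T" using UV by simp
next
  assume "Inl`A \<in> S \<and> Inr`B \<in> T"
  then show "Inl`A \<union> Inr`B \<in> rect_prod S T" unfolding rect_prod_def by auto
qed

lemma mem_L:
  assumes "A \<subseteq> {1..n}" "B \<subseteq> {1..n}"
  shows "(Inl`A \<union> Inr`B \<in> Lfam n) = (A \<inter> B \<noteq> {})"
  using assms unfolding Lfam_def Zs_def Xs_def Ys_def by auto

lemma key:
  assumes rect: "\<forall>R\<in>F. is_rect n R" and dj: "pairwise disjnt F" and un: "\<Union>F = Lfam n"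
  shows "2^n \<le> card F + 1"
proof -
  have "\<forall>R\<in>F. \<exists>ST. fst ST \<subseteq> Pow (Xs n) \<and> snd ST \<subseteq> Pow (Ys n) \<and> R = rect_prod (fst ST) (snd ST)"
    using rect unfolding is_rect_def by force
  then obtain st where st: "\<And>R. R \<in> F \<Longrightarrow> fst (st R) \<subseteq> Pow (Xs n) \<and> snd (st R) \<subseteq> Pow (Ys n) \<and> R = rect_prod (fst (st R)) (snd (st R))"
    by metis
  define Sf where "Sf R = fst (st R)" for R
  define Tf where "Tf R = snd (st R)" for R
  have ST: "\<And>R. R \<in> F \<Longrightarrow> Sf R \<subseteq> Pow (Xs n) \<and> Tf R \<subseteq> Pow (Ys n) \<and> R = rect_prod (Sf R) (Tf R)"
    using st unfolding Sf_def Tf_def by blast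
  have finZ: "finite (Zs n)" unfolding Zs_def Xs_def Ys_def by simp
  have "F \<subseteq> Pow (Pow (Zs n))" using un unfolding Lfam_def by blast
  hence finF: "finite F" using finZ by (meson finite_Pow_iff finite_subset)
  define one :: "nat set \<Rightarrow> real" where "one = (\<lambda>B. if B \<subseteq> {1..n} then 1 else 0)"
  define g :: "_ \<Rightarrow> nat set \<Rightarrow> real" where "g = (\<lambda>R B. if B \<subseteq> {1..n} \<and> Inr`B \<in> Tf R then 1 else 0)"
  have rowA: "row n A = one - (\<Sum>R\<in>F. (\<lambda>B. (if Inl`A \<in> Sf R then 1 else 0) * g R B))"
    if A: "A \<subseteq> {1..n}" for A
  proof (rule ext)
    fix B
    show "row n A B = (one - (\<Sum>R\<in>F. (\<lambda>B. (if Inl`A \<in> Sf R then 1 else 0) * g R B))) B"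
    proof (cases "B \<subseteq> {1..n}")
      case False
      then show ?thesis by (simp add: row_def one_def g_def sum_fun_apply)
    next
      case B: True
      have eq: "(\<Sum>R\<in>F. (\<lambda>B. (if Inl`A \<in> Sf R then 1 else 0) * g R B)) B
          = (\<Sum>R\<in>F. if Inl`A \<union> Inr`B \<in> R then 1 else (0::real))"
        unfolding sum_fun_apply
      proof (rule sum.cong)
        fix R assume R: "R \<in> F"
        have "(Inl`A \<union> Inr`B \<in> R) = (Inl`A \<in> Sf R \<and> Inr`B \<in> Tf R)"
          using ST[OF R] mem_rect[of "Sf R" n "Tf R" A B] by metis
        then show "(if Inl`A \<in> Sf R then 1 else 0) * g R B = (if Inl`A \<union> Inr`B \<in> R then 1 else (0::real))"
          using B by (simp add: g_def)
      qed simp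
      show ?thesis
      proof (cases "A \<inter> B = {}")
        case True
        hence "Inl`A \<union> Inr`B \<notin> \<Union>F" using mem_L[OF A B] un by simp
        hence "(\<Sum>R\<in>F. if Inl`A \<union> Inr`B \<in> R then 1 else (0::real)) = 0"
          by (intro sum.neutral) auto
        then show ?thesis using eq True B by (simp add: row_def one_def fun_diff_def)
      next
        case False
        hence "Inl`A \<union> Inr`B \<in> \<Union>F" using mem_L[OF A B] un by simp
        then obtain R0 where R0: "R0 \<in> F" "Inl`A \<union> Inr`B \<in> R0" by auto
        have "(\<Sum>R\<in>F. if Inl`A \<union> Inr`B \<in> R then 1 else (0::real)) = (\<Sum>R\<in>F. if R = R0 then 1 else 0)"
        proof (rule sum.cong)
          fix R assume R: "R \<in> F"
          show "(if Inl`A \<union> Inr`B \<in> R then 1 else (0::real)) = (if R = R0 then 1 else 0)"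
          proof (cases "R = R0")
            case False
            hence "disjnt R R0" using dj R R0(1) unfolding pairwise_def by blast
            then show ?thesis using R0 False unfolding disjnt_def by auto
          qed (use R0 in simp)
        qed simp
        also have "\<dots> = 1" using R0(1) finF by simp
        finally show ?thesis using eq False B by (simp add: row_def one_def fun_diff_def)
      qed
    qed
  qed
  let ?G = "insert one (g ` F)"
  have sp: "row n ` Pow {1..n} \<subseteq> fv.span ?G"
  proof clarify
    fix A assume A: "A \<subseteq> {1..n}"
    have "one \<in> fv.span ?G" by (rule fv.span_base) simp
    moreover have "(\<Sum>R\<in>F. (\<lambda>B. (if Inl`A \<in> Sf R then 1 else 0) * g R B)) \<in> fv.span ?G"
    proof (rule fv.span_sum)
      fix R assume "R \<in> F"
      hence "g R \<in> fv.span ?G" by (intro fv.span_base) simp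
      from fv.span_scale[OF this, of "if Inl`A \<in> Sf R then 1 else 0"]
      show "(\<lambda>B. (if Inl`A \<in> Sf R then 1 else 0) * g R B) \<in> fv.span ?G" by simp
    qed
    ultimately have "one - (\<Sum>R\<in>F. (\<lambda>B. (if Inl`A \<in> Sf R then 1 else 0) * g R B)) \<in> fv.span ?G"
      by (rule fv.span_diff)
    then show "row n A \<in> fv.span ?G" by (simp only: rowA[OF A])
  qed
  have "card (row n ` Pow {1..n}) \<le> card ?G"
    using fv.independent_span_bound[OF _ row_indep sp] finF by simp
  also have "\<dots> \<le> card (g ` F) + 1" by (simp add: card_insert_le_m1)
  also have "\<dots> \<le> card F + 1" using card_image_le[OF finF] by simp
  finally show ?thesis using card_image[OF row_inj, of n] by (simp add: card_Pow)
qed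

theorem mainTheorem10:
  shows "\<exists>c::real. c > 0 \<and> (\<exists>N::nat. \<forall>n\<ge>N. \<forall>F :: (nat + nat) set set set.
           (\<forall>R\<in>F. is_rect n R) \<and> pairwise disjnt F \<and> \<Union>F = Lfam n
           \<longrightarrow> 2 powr (c * real n) \<le> real (card F))"
proof (intro exI[of _ "1/2"] conjI exI[of _ 2] allI impI)
  fix n :: nat and F :: "(nat + nat) set set set"
  assume n: "2 \<le> n" and h: "(\<forall>R\<in>F. is_rect n R) \<and> pairwise disjnt F \<and> \<Union>F = Lfam n"
  have k: "2^n \<le> card F + 1" using key h by blast
  have "2 powr (1/2 * real n) \<le> 2 powr (real (n - 1))"
    using n by (intro powr_mono) auto
  also have "\<dots> = 2 ^ (n - 1)" by (simp add: powr_realpow)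
  also have "(2::real) ^ (n - 1) \<le> 2 ^ n - 1"
  proof -
    have "(2::real) ^ n = 2 * 2 ^ (n - 1)" using n by (metis Suc_diff_1 not_numeral_le_zero le_zero_eq neq0_conv power_Suc)
    moreover have "(1::real) \<le> 2 ^ (n - 1)" by simp
    ultimately show ?thesis by simp
  qed
  also have "\<dots> \<le> real (card F)"
  proof -
    have "real (2^n) \<le> real (card F + 1)" using k by linarith
    then show ?thesis by simp
  qed
  finally show "2 powr (1/2 * real n) \<le> real (card F)" .
qed (simp)

end
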